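(* For every integer $k\ge 3$, there exists a majority neighbor sum distinguishing $4$-edge-coloring $c$ of $K_{2k}$ with the following property: if $v_1,\dots,v_{2k}$ is the ordering of the vertices of $K_{2k}$ with $\sigma_c(v_i)<\sigma_c(v_j)$ for all $i<j$, then $v_k$ is incident to at most $k-2$ edges of color $2$, or $v_{k+1}$ is incident to at most $k-2$ edges of color $3$.
   Context: A $4$-edge-coloring of $G$ is any map $c:E(G)\to\{1,2,3,4\}$ (adjacent edges may share colors). It induces $\sigma_c(v)=\sum_{u\in N(v)}c(vu)$. The coloring is neighbor sum distinguishing if $\sigma_c(u)\ne\sigma_c(v)$ for every edge $uv$ (in a complete graph this means all values $\sigma_c(v)$ are distinct, so the ordering is well defined), and majority if every vertex $v$ is incident to at most $d(v)/2$ edges of each single color. *)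

theory Defs
  imports Main
begin

text \<open>The complete graph K_n has vertex set {..<n} and edge set all doubletons {u,v}, u \<noteq> v.
  An edge coloring is a map from edges (doubleton sets) to colors.\<close>

definition is_4_edge_coloring :: "nat \<Rightarrow> (nat set \<Rightarrow> nat) \<Rightarrow> bool" where
  "is_4_edge_coloring n c \<longleftrightarrow> (\<forall>u<n. \<forall>v<n. u \<noteq> v \<longrightarrow> c {u, v} \<in> {1..4})"

definition sigma :: "nat \<Rightarrow> (nat set \<Rightarrow> nat) \<Rightarrow> nat \<Rightarrow> nat" where
  "sigma n c v = (\<Sum>u\<in>{..<n} - {v}. c {v, u})"

definition deg_col :: "nat \<Rightarrow> (nat set \<Rightarrow> nat) \<Rightarrow> nat \<Rightarrow> nat \<Rightarrow> nat" where
  "deg_col n c v j = card {u \<in> {..<n} - {v}. c {v, u} = j}"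

definition nsd :: "nat \<Rightarrow> (nat set \<Rightarrow> nat) \<Rightarrow> bool" where
  "nsd n c \<longleftrightarrow> (\<forall>u<n. \<forall>v<n. u \<noteq> v \<longrightarrow> sigma n c u \<noteq> sigma n c v)"

text \<open>Majority: each vertex (degree n-1 in K_n) has at most d(v)/2 edges of each color.\<close>
definition majority :: "nat \<Rightarrow> (nat set \<Rightarrow> nat) \<Rightarrow> bool" where
  "majority n c \<longleftrightarrow> (\<forall>v<n. \<forall>j. 2 * deg_col n c v j \<le> n - 1)"

end

theory Submission
  imports Defs
begin

definition fk :: "nat \<Rightarrow> nat \<Rightarrow> nat" where
  "fk k s = (if s < k then 1 else if s \<le> 2*k-2 then (if even s then 2 else 3)
     else if s = 2*k-1 then 2 else if even s then 3 else 4)"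

definition col :: "nat \<Rightarrow> nat set \<Rightarrow> nat" where
  "col k e = fk k (\<Sum>x\<in>e. x)"

lemma col_pair: "u \<noteq> v \<Longrightarrow> col k {v,u} = fk k (v+u)"
  unfolding col_def by simp

lemma sigma_eq: "sigma n (col k) v = (\<Sum>u\<in>{..<n}-{v}. fk k (v+u))"
  unfolding sigma_def by (rule sum.cong) (auto simp: col_pair)

lemma card_odd: "card {s. a \<le> s \<and> s < b \<and> odd s} = b div 2 - a div 2"
proof (induction b)
  case 0 then show ?case by simp
next
  case (Suc b)
  have e: "{s. a \<le> s \<and> s < Suc b \<and> odd s} = {s. a \<le> s \<and> s < b \<and> odd s} \<union> (if a \<le> b \<and> odd b then {b} else {})"
    by (auto simp: less_Suc_eq)
  have f: "finite {s. a \<le> s \<and> s < b \<and> odd s}" by auto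
  show ?case
    using Suc f unfolding e by (auto simp: card_insert_if)
qed

lemma card_even: "card {s. a \<le> s \<and> s < b \<and> even s} = (b+1) div 2 - (a+1) div 2"
proof (induction b)
  case 0 then show ?case by simp
next
  case (Suc b)
  have e: "{s. a \<le> s \<and> s < Suc b \<and> even s} = {s. a \<le> s \<and> s < b \<and> even s} \<union> (if a \<le> b \<and> even b then {b} else {})"
    by (auto simp: less_Suc_eq)
  have f: "finite {s. a \<le> s \<and> s < b \<and> even s}" by auto
  show ?case
    using Suc f unfolding e by (auto simp: card_insert_if)
qed

lemma shift_sum: "(\<Sum>u<n. g (Suc v + u)) + g v = (\<Sum>u<n. g (v+u)) + (g (v+n) :: nat)"
  by (induction n) (auto simp: add.commute)

lemma sum_split: "v < (n::nat) \<Longrightarrow> (\<Sum>u<n. g (v+u)) = (\<Sum>u\<in>{..<n}-{v}. g (v+u)) + (g (v+v) :: nat)"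
  using sum.remove[of "{..<n}" v "\<lambda>u. g (v+u)"] by (simp add: add.commute lessThan_iff)

lemma fk_step: "k \<ge> 3 \<Longrightarrow> Suc v < 2*k \<Longrightarrow> fk k (2*v+2) + fk k v < fk k (2*v) + fk k (v + 2*k)"
  unfolding fk_def by (auto split: if_splits)

lemma sigma_step:
  assumes "k \<ge> 3" "Suc v < 2*k"
  shows "sigma (2*k) (col k) v < sigma (2*k) (col k) (Suc v)"
proof -
  let ?g = "fk k"
  have a: "(\<Sum>u<2*k. ?g (Suc v + u)) + ?g v = (\<Sum>u<2*k. ?g (v+u)) + ?g (v+2*k)"
    by (rule shift_sum)
  have b: "(\<Sum>u<2*k. ?g (Suc v + u)) = sigma (2*k) (col k) (Suc v) + ?g (2*v+2)"
    using sum_split[of "Suc v" "2*k" ?g] assms by (simp add: sigma_eq mult_2)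
  have c: "(\<Sum>u<2*k. ?g (v + u)) = sigma (2*k) (col k) v + ?g (2*v)"
    using sum_split[of v "2*k" ?g] assms by (simp add: sigma_eq mult_2)
  show ?thesis using a b c fk_step[OF assms] by linarith
qed

lemma sigma_mono:
  assumes "k \<ge> 3" "v < w" "w < 2*k"
  shows "sigma (2*k) (col k) v < sigma (2*k) (col k) w"
  using assms(2,3)
proof (induction w)
  case 0 then show ?case by simp
next
  case (Suc w)
  show ?case
  proof (cases "v = w")
    case True then show ?thesis using sigma_step[OF assms(1)] Suc by simp
  next
    case False
    then have "sigma (2*k) (col k) v < sigma (2*k) (col k) w" using Suc by simp
    also have "\<dots> < sigma (2*k) (col k) (Suc w)" using sigma_step[OF assms(1)] Suc by simp
    finally show ?thesis .
  qed
qed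

lemma deg_bound:
  assumes "\<And>u. u < n \<Longrightarrow> u \<noteq> v \<Longrightarrow> fk k (v+u) = j \<Longrightarrow> v+u \<in> B" "finite B"
  shows "deg_col n (col k) v j \<le> card B"
proof -
  have "deg_col n (col k) v j = card {u \<in> {..<n} - {v}. fk k (v+u) = j}"
    unfolding deg_col_def by (rule arg_cong[where f=card]) (auto simp: col_pair)
  also have "\<dots> \<le> card B"
    by (rule card_inj_on_le[where f="\<lambda>u. v+u"]) (use assms in \<open>auto simp: inj_on_def\<close>)
  finally show ?thesis .
qed


lemma fk3: "fk k s = 3 \<Longrightarrow> (k \<le> s \<and> s < 2*k-2 \<and> odd s) \<or> (2*k \<le> s \<and> even s)"
proof -
  assume a: "fk k s = 3"
  have ev: "even (2*k-2)" by simp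
  have e: "odd s \<Longrightarrow> s < 2*k-2 \<or> s > 2*k-2" using ev by (cases "s = 2*k-2") auto
  show ?thesis using a e unfolding fk_def by (auto split: if_splits)
qed

lemma fk1: "fk k s = 1 \<Longrightarrow> s < k"
  unfolding fk_def by (auto split: if_splits)

lemma fk2: "fk k s = 2 \<Longrightarrow> (k \<le> s \<and> s < 2*k-1 \<and> even s) \<or> s = 2*k-1"
  unfolding fk_def by (auto split: if_splits)

lemma fk4: "fk k s = 4 \<Longrightarrow> 2*k \<le> s \<and> odd s"
  unfolding fk_def by (auto split: if_splits)

lemma card_Un3: "finite A \<Longrightarrow> finite B \<Longrightarrow> finite C \<Longrightarrow> card (A \<union> B \<union> C) \<le> card A + card B + card C"
  by (meson add_le_mono card_Un_le finite_UnI le_refl order_trans)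

lemma dv: "2*(m div 2) \<le> (m::nat)" "m \<le> 2*(m div 2) + 1" by auto
lemma e1: "(2*k-2) div 2 = (k::nat) - 1" by (metis div_mult_self1_is_m mult_2 diff_mult_distrib2 mult_numeral_1_right numeral_One zero_less_numeral mult.commute)
lemma e2: "(v+2*k+1) div 2 = (v+1) div 2 + (k::nat)"
proof - have "v+2*k+1 = (v+1) + k*2" by simp then show ?thesis by simp qed
lemma e3: "(2*k+1) div 2 = (k::nat)" by simp

lemma maj:
  assumes k: "k \<ge> 3" and v: "v < 2*k"
  shows "deg_col (2*k) (col k) v j \<le> k - 1"
proof -
  consider "j = 1" | "j = 2" | "j = 3" "v < k" | "j = 3" "v \<ge> k" | "j = 4" | "j \<notin> {1,2,3,4}" by force
  then show ?thesis
  proof cases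
    case 1
    have "deg_col (2*k) (col k) v j \<le> card {max v 1..<k}"
      apply (rule deg_bound) subgoal for u by (use 1 fk1[of k "v+u"] in \<open>cases "v = 0"; simp\<close>)
      by simp
    then show ?thesis by simp
  next
    case 2
    let ?A = "{s. k \<le> s \<and> s < 2*k-1 \<and> even s}"
    have "deg_col (2*k) (col k) v j \<le> card (?A \<union> {2*k-1})"
      apply (rule deg_bound) subgoal for u by (use 2 fk2[of k "v+u"] in auto)
      by simp
    also have "\<dots> \<le> card ?A + card {2*k-1}" by (rule card_Un_le)
    also have "\<dots> = (2*k-1+1) div 2 - (k+1) div 2 + 1" unfolding card_even by simp
    also have "\<dots> \<le> k - 1" using k dv[of "k+1"] by simp
    finally show ?thesis .
  next
    case 3
    let ?A = "{s. k \<le> s \<and> s < 2*k-2 \<and> odd s}"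
    let ?B = "{s. 2*k \<le> s \<and> s < v+2*k \<and> even s}"
    have "deg_col (2*k) (col k) v j \<le> card (?A \<union> ?B)"
      apply (rule deg_bound) subgoal by (use 3 in \<open>auto dest: fk3\<close>)
      by simp
    also have "\<dots> \<le> card ?A + card ?B" by (rule card_Un_le)
    also have "\<dots> = (2*k-2) div 2 - k div 2 + ((v+2*k+1) div 2 - (2*k+1) div 2)"
      unfolding card_even card_odd by simp
    also have "\<dots> \<le> k - 1" unfolding e1 e2 e3 using k 3 dv[of k] dv[of "v+1"] by linarith
    finally show ?thesis .
  next
    case 4
    let ?A = "{s. v \<le> s \<and> s < 2*k-2 \<and> odd s}"
    let ?B = "{s. 2*k \<le> s \<and> s < 2*v \<and> even s}"
    let ?C = "{s. 2*v+1 \<le> s \<and> s < v+2*k \<and> even s}"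
    have "deg_col (2*k) (col k) v j \<le> card (?A \<union> ?B \<union> ?C)"
      apply (rule deg_bound) subgoal by (use 4 in \<open>auto dest: fk3\<close>)
      by simp
    also have "\<dots> \<le> card ?A + card ?B + card ?C" by (rule card_Un3) auto
    also have "\<dots> = (2*k-2) div 2 - v div 2 + ((2*v+1) div 2 - (2*k+1) div 2) + ((v+2*k+1) div 2 - (2*v+1+1) div 2)"
      unfolding card_even card_odd by simp
    also have "\<dots> \<le> k - 1" unfolding e1 e2 e3 using k 4 v dv[of v] dv[of "v+1"] by simp
    finally show ?thesis .
  next
    case 5
    let ?A = "{s. 2*k \<le> s \<and> s < v+2*k \<and> odd s}"
    have "deg_col (2*k) (col k) v j \<le> card ?A"
      apply (rule deg_bound) subgoal for u by (use 5 fk4[of k "v+u"] in auto)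
      by simp
    also have "\<dots> = (v+2*k) div 2 - (2*k) div 2" unfolding card_odd by simp
    also have "\<dots> \<le> k - 1" using k v dv[of v] by simp
    finally show ?thesis .
  next
    case 6
    have "deg_col (2*k) (col k) v j \<le> card ({}::nat set)"
      apply (rule deg_bound) subgoal for u by (use 6 in \<open>simp add: fk_def split: if_splits\<close>)
      by simp
    then show ?thesis by simp
  qed
qed

lemma final:
  assumes k: "k \<ge> 3"
  shows "deg_col (2*k) (col k) (k-1) 2 \<le> k - 2"
proof -
  let ?A = "{s. k \<le> s \<and> s < 2*k-2 \<and> even s}"
  have "deg_col (2*k) (col k) (k-1) 2 \<le> card (?A \<union> {2*k-1})"
    apply (rule deg_bound) subgoal for u by (use k fk2[of k "k-1+u"] in auto)
      by simp
  also have "\<dots> \<le> card ?A + card {2*k-1}" by (rule card_Un_le)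
  also have "\<dots> = (2*k-2+1) div 2 - (k+1) div 2 + 1" unfolding card_even by simp
  also have "\<dots> \<le> k - 2" using k dv[of "k+1"] by simp
  finally show ?thesis .
qed


lemma ord_k:
  assumes k: "k \<ge> 3"
    and bij: "bij_betw ord {1..2*k} {..<2*k}"
    and mono: "\<forall>i\<in>{1..2*k}. \<forall>j\<in>{1..2*k}. i < j \<longrightarrow> sigma (2*k) (col k) (ord i) < sigma (2*k) (col k) (ord j)"
  shows "ord k = k - 1"
proof -
  have rng: "\<And>i. 1 \<le> i \<Longrightarrow> i \<le> 2*k \<Longrightarrow> ord i < 2*k"
    using bij unfolding bij_betw_def by auto
  have inc: "ord i < ord (Suc i)" if "1 \<le> i" "i < 2*k" for i
  proof (rule ccontr)
    assume "\<not> ord i < ord (Suc i)"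
    then have le: "ord (Suc i) \<le> ord i" by simp
    have "sigma (2*k) (col k) (ord i) < sigma (2*k) (col k) (ord (Suc i))"
      using mono that by auto
    moreover have "sigma (2*k) (col k) (ord (Suc i)) \<le> sigma (2*k) (col k) (ord i)"
    proof (cases "ord (Suc i) = ord i")
      case False
      then show ?thesis using sigma_mono[OF k, of "ord (Suc i)" "ord i"] le rng[of i] that by simp
    qed simp
    ultimately show False by simp
  qed
  have lower: "i - 1 \<le> ord i" if "1 \<le> i" "i \<le> 2*k" for i
    using that
  proof (induction i)
    case 0 then show ?case by simp
  next
    case (Suc i)
    show ?case
    proof (cases "i = 0")
      case False
      then have "i - 1 \<le> ord i" using Suc by simp
      moreover have "ord i < ord (Suc i)" using inc[of i] Suc False by simp
      ultimately show ?thesis by simp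
    qed simp
  qed
  have upper: "ord (2*k - j) + j + 1 \<le> 2*k" if "j < 2*k" for j
    using that
  proof (induction j)
    case 0 then show ?case using rng[of "2*k"] k by simp
  next
    case (Suc j)
    have "ord (2*k - Suc j) < ord (Suc (2*k - Suc j))" using inc[of "2*k - Suc j"] Suc by simp
    moreover have "Suc (2*k - Suc j) = 2*k - j" using Suc by simp
    ultimately show ?case using Suc by simp
  qed
  have "k - 1 \<le> ord k" using lower[of k] k by simp
  moreover have "ord (2*k - k) + k + 1 \<le> 2*k" using upper[of k] k by simp
  ultimately show ?thesis by simp
qed

theorem mainTheorem20:
  fixes k :: nat
  assumes "k \<ge> 3"
  shows "\<exists>c. is_4_edge_coloring (2*k) c \<and> nsd (2*k) c \<and> majority (2*k) c \<and>
    (\<forall>ord. bij_betw ord {1..2*k} {..<2*k} \<and>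
       (\<forall>i\<in>{1..2*k}. \<forall>j\<in>{1..2*k}. i < j \<longrightarrow> sigma (2*k) c (ord i) < sigma (2*k) c (ord j))
     \<longrightarrow> deg_col (2*k) c (ord k) 2 \<le> k - 2 \<or> deg_col (2*k) c (ord (k+1)) 3 \<le> k - 2)"
proof (intro exI[of _ "col k"] conjI allI impI)
  show "is_4_edge_coloring (2*k) (col k)"
    unfolding is_4_edge_coloring_def by (auto simp: col_pair fk_def)
  show "nsd (2*k) (col k)"
    unfolding nsd_def
  proof (intro allI impI)
    fix u v assume "u < 2*k" "v < 2*k" "u \<noteq> v"
    then show "sigma (2*k) (col k) u \<noteq> sigma (2*k) (col k) v"
      using sigma_mono[OF assms, of u v] sigma_mono[OF assms, of v u]
      by (cases "u < v") auto
  qed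
  show "majority (2*k) (col k)"
    unfolding majority_def
  proof (intro allI impI)
    fix v j assume "v < 2*k"
    then have "deg_col (2*k) (col k) v j \<le> k - 1" by (rule maj[OF assms])
    then show "2 * deg_col (2*k) (col k) v j \<le> 2*k - 1" using assms by simp
  qed
  fix ord
  assume h: "bij_betw ord {1..2*k} {..<2*k} \<and>
       (\<forall>i\<in>{1..2*k}. \<forall>j\<in>{1..2*k}. i < j \<longrightarrow> sigma (2*k) (col k) (ord i) < sigma (2*k) (col k) (ord j))"
  then have "ord k = k - 1" using ord_k[OF assms] by blast
  then show "deg_col (2*k) (col k) (ord k) 2 \<le> k - 2 \<or> deg_col (2*k) (col k) (ord (k+1)) 3 \<le> k - 2"
    using final[OF assms] by simp
qed

end
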